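(* Let $p$ be an odd prime. Then $$L(p^2+1)=L(p^2-1)=\frac{p-1}{2}\cdot\frac{p^2-1}{2}.$$
   Context: For an odd prime $p$ and a positive integer $d$, define $$L(d)=\max_{1\le j\le p-1}\ \sum_{i=j}^{p-1}\left(\left\lfloor \frac{id}{p}\right\rfloor-\left\lfloor \frac{id}{p}-\left(1-\frac1p\right)\frac{jd}{p}\right\rfloor\right).$$ (This is the Booher–Cais lower bound for the $a$-number of a $\mathbb Z/p\mathbb Z$-Galois cover of curves branched at exactly one point with ramification break $d$.) *)

theory Defs
  imports Complex_Main "HOL-Computational_Algebra.Primes"
begin

text \<open>Booher--Cais lower bound L(d) for a prime p (p is an explicit parameter).\<close>
definition BCbound :: "nat \<Rightarrow> nat \<Rightarrow> int" where
  "BCbound p d = Max ((\<lambda>j. \<Sum>i\<in>{j..p-1}.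
       (\<lfloor>real (i*d) / real p\<rfloor>
        - \<lfloor>real (i*d) / real p - (1 - 1 / real p) * (real (j*d) / real p)\<rfloor>)) ` {1..p-1})"

end

theory Submission imports Defs begin

lemma termP:
  fixes p i j :: nat
  assumes "1 \<le> j" "j \<le> i" "i \<le> p - 1" "p \<ge> 2"
  shows "\<lfloor>real (i*(p^2+1)) / real p\<rfloor>
        - \<lfloor>real (i*(p^2+1)) / real p - (1 - 1 / real p) * (real (j*(p^2+1)) / real p)\<rfloor> = int (j*(p-1))"
proof -
  have pp: "real p > 0" using assms by simp
  have ip: "real i \<le> real p - 1" using assms by linarith
  have ji: "real j \<le> real i" "real j \<ge> 1" using assms by auto
  have e1: "real (i*(p^2+1)) / real p = real (i*p) + real i / real p"
    using pp by (simp add: field_simps power2_eq_square)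
  have f1: "\<lfloor>real (i*(p^2+1)) / real p\<rfloor> = int (i*p)"
    unfolding e1 using pp ip ji by (subst floor_eq_iff) (auto simp: field_simps)
  have e2: "real (i*(p^2+1)) / real p - (1 - 1 / real p) * (real (j*(p^2+1)) / real p)
     = real (i*p) - real j * (real p - 1) + ((real i - real j) * real p + real j) / (real p)^2"
    using pp by (simp add: field_simps power2_eq_square)
  have b1: "0 \<le> ((real i - real j) * real p + real j)" using ji pp by simp
  have b2: "(real i - real j) * real p \<le> (real p - 1 - real j) * real p"
    using ip pp by (intro mult_right_mono) auto
  have jjp: "real j * 1 \<le> real j * real p" using assms by (intro mult_left_mono) auto
  have b3e: "(real p - 1 - real j) * real p + real j = (real p)^2 - real p - real j*real p + real j"
    by (simp add: algebra_simps power2_eq_square)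
  have b3: "(real p - 1 - real j) * real p + real j < (real p)^2"
    using ji pp jjp b3e by linarith
  have b5: "(real i - real j)*real p + real j < (real p)^2" using b2 b3 by linarith
  have fr: "0 \<le> ((real i - real j) * real p + real j) / (real p)^2"
           "((real i - real j) * real p + real j) / (real p)^2 < 1"
    using b1 b5 pp by (auto simp: divide_simps)
  have jp: "real (j*(p-1)) = real j * (real p - 1)" using assms by (simp add: of_nat_diff)
  have f2: "\<lfloor>real (i*(p^2+1)) / real p - (1 - 1 / real p) * (real (j*(p^2+1)) / real p)\<rfloor>
      = int (i*p) - int (j*(p-1))"
    unfolding e2 using fr jp by (subst floor_eq_iff) auto
  show ?thesis using f1 f2 by simp
qed

lemma termM:
  fixes p i j :: nat
  assumes "1 \<le> j" "j \<le> i" "i \<le> p - 1" "p \<ge> 2"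
  shows "\<lfloor>real (i*(p^2-1)) / real p\<rfloor>
        - \<lfloor>real (i*(p^2-1)) / real p - (1 - 1 / real p) * (real (j*(p^2-1)) / real p)\<rfloor> = int (j*(p-1))"
proof -
  have pp: "real p > 0" using assms by simp
  have ip: "real i \<le> real p - 1" using assms by linarith
  have ji: "real j \<le> real i" "real j \<ge> 1" using assms by auto
  have sq: "real (p^2-1) = (real p)^2 - 1" using assms
    by (simp add: of_nat_diff)
  have e1: "real (i*(p^2-1)) / real p = real (i*p) - 1 + (real p - real i) / real p"
    using pp unfolding of_nat_mult sq by (simp add: field_simps power2_eq_square)
  have f1: "\<lfloor>real (i*(p^2-1)) / real p\<rfloor> = int (i*p) - 1"
    unfolding e1 using pp ip ji by (subst floor_eq_iff) (auto simp: field_simps)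
  have e2: "real (i*(p^2-1)) / real p - (1 - 1 / real p) * (real (j*(p^2-1)) / real p)
     = real (i*p) - real j * (real p - 1) - 1 + ((real p)^2 - ((real i - real j) * real p + real j)) / (real p)^2"
    using pp unfolding of_nat_mult sq by (simp add: field_simps power2_eq_square)
  have b1: "0 \<le> ((real i - real j) * real p + real j)" using ji pp by simp
  have b2: "(real i - real j) * real p \<le> (real p - 1 - real j) * real p"
    using ip pp by (intro mult_right_mono) auto
  have jjp: "real j * 1 \<le> real j * real p" using assms by (intro mult_left_mono) auto
  have b3e: "(real p - 1 - real j) * real p + real j = (real p)^2 - real p - real j*real p + real j"
    by (simp add: algebra_simps power2_eq_square)
  have b3: "(real p - 1 - real j) * real p + real j < (real p)^2"
    using ji pp jjp b3e by linarith
  have b5: "(real i - real j)*real p + real j < (real p)^2" using b2 b3 by linarith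
  have b4: "0 < ((real i - real j) * real p + real j)" using ji pp
    by (smt (verit) mult_nonneg_nonneg)
  have fr: "0 \<le> ((real p)^2 - ((real i - real j) * real p + real j)) / (real p)^2"
           "((real p)^2 - ((real i - real j) * real p + real j)) / (real p)^2 < 1"
    using b4 b5 pp by (auto simp: divide_simps)
  have jp: "real (j*(p-1)) = real j * (real p - 1)" using assms by (simp add: of_nat_diff)
  have f2: "\<lfloor>real (i*(p^2-1)) / real p - (1 - 1 / real p) * (real (j*(p^2-1)) / real p)\<rfloor>
      = int (i*p) - int (j*(p-1)) - 1"
    unfolding e2 using fr jp by (subst floor_eq_iff) auto
  show ?thesis using f1 f2 by simp
qed

lemma sumP:
  assumes "1 \<le> j" "j \<le> p - 1" "p \<ge> 2"
  shows "(\<Sum>i\<in>{j..p-1}. (\<lfloor>real (i*(p^2+1)) / real p\<rfloor>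
        - \<lfloor>real (i*(p^2+1)) / real p - (1 - 1 / real p) * (real (j*(p^2+1)) / real p)\<rfloor>))
     = int (p - j) * int (j*(p-1))"
proof -
  have "(\<Sum>i\<in>{j..p-1}. (\<lfloor>real (i*(p^2+1)) / real p\<rfloor>
        - \<lfloor>real (i*(p^2+1)) / real p - (1 - 1 / real p) * (real (j*(p^2+1)) / real p)\<rfloor>))
     = (\<Sum>i\<in>{j..p-1}. int (j*(p-1)))"
    using assms by (intro sum.cong refl termP) auto
  also have "\<dots> = int (p - j) * int (j*(p-1))" using assms by simp
  finally show ?thesis .
qed

lemma sumM:
  assumes "1 \<le> j" "j \<le> p - 1" "p \<ge> 2"
  shows "(\<Sum>i\<in>{j..p-1}. (\<lfloor>real (i*(p^2-1)) / real p\<rfloor>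
        - \<lfloor>real (i*(p^2-1)) / real p - (1 - 1 / real p) * (real (j*(p^2-1)) / real p)\<rfloor>))
     = int (p - j) * int (j*(p-1))"
proof -
  have "(\<Sum>i\<in>{j..p-1}. (\<lfloor>real (i*(p^2-1)) / real p\<rfloor>
        - \<lfloor>real (i*(p^2-1)) / real p - (1 - 1 / real p) * (real (j*(p^2-1)) / real p)\<rfloor>))
     = (\<Sum>i\<in>{j..p-1}. int (j*(p-1)))"
    using assms by (intro sum.cong refl termM) auto
  also have "\<dots> = int (p - j) * int (j*(p-1))" using assms by simp
  finally show ?thesis .
qed

lemma maxval:
  fixes k :: nat
  assumes "k \<ge> 1"
  shows "Max ((\<lambda>j. int (2*k+1 - j) * int (j*(2*k+1-1))) ` {1..2*k+1-1}) = int (k+1) * int (k*(2*k))"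
proof (rule Max_eqI)
  show "finite ((\<lambda>j. int (2*k+1 - j) * int (j*(2*k+1-1))) ` {1..2*k+1-1})" by simp
  show "int (k+1) * int (k*(2*k)) \<in> (\<lambda>j. int (2*k+1 - j) * int (j*(2*k+1-1))) ` {1..2*k+1-1}"
    using assms by (intro image_eqI[where x=k]) auto
  fix y assume "y \<in> (\<lambda>j. int (2*k+1 - j) * int (j*(2*k+1-1))) ` {1..2*k+1-1}"
  then obtain j where j: "j \<in> {1..2*k}" and y: "y = int (2*k+1 - j) * int (j*(2*k))" by auto
  have "int (2*k+1 - j) * int j \<le> int (k+1) * int k"
  proof -
    have jj: "int (2*k+1-j) = 2*int k + 1 - int j" using j by auto
    have "(int j - int k) * (int j - int k - 1) \<ge> 0"
    proof (cases "j \<le> k")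
      case True then show ?thesis by (intro mult_nonpos_nonpos) auto
    next
      case False then show ?thesis by (intro mult_nonneg_nonneg) auto
    qed
    then show ?thesis unfolding jj by (simp add: algebra_simps)
  qed
  then have "int (2*k+1 - j) * int j * (2*int k) \<le> int (k+1) * int k * (2 * int k)"
    by (intro mult_right_mono) auto
  then show "y \<le> int (k+1) * int (k*(2*k))" unfolding y by (simp add: algebra_simps)
qed

theorem mainTheorem1:
  fixes p :: nat
  assumes "prime p" and "odd p"
  shows "BCbound p (p^2 + 1) = BCbound p (p^2 - 1)
       \<and> real_of_int (BCbound p (p^2 - 1)) = (real p - 1) / 2 * ((real p ^ 2 - 1) / 2)"
proof -
  have p2: "p \<ge> 2" using assms prime_ge_2_nat by blast
  obtain k where pk: "p = 2*k+1" using assms(2) oddE by blast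
  have k1: "k \<ge> 1" using p2 pk by simp
  have A: "BCbound p (p^2+1) = Max ((\<lambda>j. int (p - j) * int (j*(p-1))) ` {1..p-1})"
    unfolding BCbound_def using p2 by (intro arg_cong[where f=Max] image_cong refl sumP) auto
  have B: "BCbound p (p^2-1) = Max ((\<lambda>j. int (p - j) * int (j*(p-1))) ` {1..p-1})"
    unfolding BCbound_def using p2 by (intro arg_cong[where f=Max] image_cong refl sumM) auto
  have C: "BCbound p (p^2-1) = int (k+1) * int (k*(2*k))"
    unfolding B using maxval[OF k1] by (simp only: pk[symmetric])
  have "real_of_int (BCbound p (p^2 - 1)) = real_of_int (int (k+1) * int (k*(2*k)))"
    using C by simp
  also have "\<dots> = (real p - 1) / 2 * ((real p ^ 2 - 1) / 2)"
    unfolding pk by (simp add: algebra_simps power2_eq_square)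
  finally have "real_of_int (BCbound p (p^2 - 1)) = (real p - 1) / 2 * ((real p ^ 2 - 1) / 2)" .
  then show ?thesis using A B by simp
qed

end
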